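(* Let $N\ge 1$, let $G:\mathbb{R}_{\ge 0}\to\mathbb{R}_{\ge 0}$ be strictly convex and increasing with $G(0)=0$, and let $w_0,\dots,w_{N-1}>0$ be known demands. Consider the problem $$\min_{u\in\mathbb{R}_{\ge 0}^N}\ \sum_{k=0}^{N-1}G(u_k)\quad\text{s.t.}\quad \sum_{j=0}^{k}u_j\ \ge\ \sum_{j=0}^{k}w_j\quad\text{for all }k\in\{0,\dots,N-1\}.$$ (Equivalently: minimize $\sum_k G(u_k)$ subject to $x_0=0$, $x_{k+1}=x_k+u_k-w_k$, $x_k\ge 0$ for $k=1,\dots,N$.) Then $u^*=\mathrm{LS}(w_0,\dots,w_{N-1})$ is the optimal solution of this problem. Moreover, the optimal trajectory is non-increasing: $u^*_{k+1}\le u^*_k$ for all $k\in\{0,\dots,N-2\}$.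
   Context: Block-averaging (load shifting) procedure $\mathrm{LS}$: given a finite sequence $v=(v_0,\dots,v_{N-1})$ of positive reals, define indices $0=k_0<k_1<\dots<k_n=N$ recursively: if $k_l<N$, let $k_{l+1}=k_l+j^*$, where $j^*$ is the largest element of $\arg\max_{j\in\{1,\dots,N-k_l\}}\frac{1}{j}\sum_{i=k_l}^{k_l+j-1}v_i$; stop when $k_n=N$. Then $\mathrm{LS}(v)=(u_0,\dots,u_{N-1})$ with $u_i=\frac{1}{k_{l+1}-k_l}\sum_{m=k_l}^{k_{l+1}-1}v_m$ for all $k_l\le i<k_{l+1}$, $l=0,\dots,n-1$. (The paper's $\textsc{LoadShift}(\bm w,0,0)$ is $\mathrm{LS}(w)$.) *)

theory Defs
  imports "HOL-Analysis.Analysis"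
begin

definition strict_convex_on :: "real set \<Rightarrow> (real \<Rightarrow> real) \<Rightarrow> bool" where
  "strict_convex_on S f \<longleftrightarrow> convex S \<and>
    (\<forall>x\<in>S. \<forall>y\<in>S. \<forall>t. x \<noteq> y \<longrightarrow> 0 < t \<longrightarrow> t < 1 \<longrightarrow>
       f (t * x + (1 - t) * y) < t * f x + (1 - t) * f y)"

definition blk_avg :: "(nat \<Rightarrow> real) \<Rightarrow> nat \<Rightarrow> nat \<Rightarrow> real" where
  "blk_avg v k j = (\<Sum>i=k..<k+j. v i) / real j"

definition jstar :: "(nat \<Rightarrow> real) \<Rightarrow> nat \<Rightarrow> nat \<Rightarrow> nat" where
  "jstar v N k = Max {j \<in> {1..N-k}. \<forall>j'\<in>{1..N-k}. blk_avg v k j' \<le> blk_avg v k j}"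

lemma jstar_pos:
  assumes "k < N" shows "jstar v N k \<ge> 1"
proof -
  let ?A = "{1..N-k}"
  have fin: "finite ?A" and ne: "?A \<noteq> {}" using assms by auto
  have "Max (blk_avg v k ` ?A) \<in> blk_avg v k ` ?A" using fin ne by (intro Max_in) auto
  then obtain j where j: "j \<in> ?A" "blk_avg v k j = Max (blk_avg v k ` ?A)" by auto
  have jm: "\<forall>j'\<in>?A. blk_avg v k j' \<le> blk_avg v k j" using j fin by auto
  let ?S = "{j \<in> ?A. \<forall>j'\<in>?A. blk_avg v k j' \<le> blk_avg v k j}"
  have "j \<in> ?S" using j jm by auto
  moreover have "finite ?S" using fin by auto
  ultimately have "j \<le> Max ?S" by (simp add: Max_ge)
  hence "j \<le> jstar v N k" unfolding jstar_def .
  thus ?thesis using j(1) by auto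
qed

function ls_from :: "(nat \<Rightarrow> real) \<Rightarrow> nat \<Rightarrow> nat \<Rightarrow> nat \<Rightarrow> real" where
  "ls_from v N k i =
     (if N \<le> k then 0
      else if i < k + jstar v N k then blk_avg v k (jstar v N k)
      else ls_from v N (k + jstar v N k) i)"
  by pat_completeness auto
termination
  by (relation "Wellfounded.measure (\<lambda>(v, N, k, i). N - k)")
     (auto, metis jstar_pos not_le diff_less_mono2 less_add_same_cancel1 less_le_trans zero_less_one
        add_diff_cancel_left' diff_diff_left zero_less_diff)

text \<open>The block-averaging procedure LS(v_0,...,v_{N-1}); values outside {0..<N} are irrelevant (set to 0).\<close>
definition LS :: "(nat \<Rightarrow> real) \<Rightarrow> nat \<Rightarrow> nat \<Rightarrow> real" where
  "LS v N = ls_from v N 0"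

definition feasible :: "(nat \<Rightarrow> real) \<Rightarrow> nat \<Rightarrow> (nat \<Rightarrow> real) \<Rightarrow> bool" where
  "feasible w N u \<longleftrightarrow> (\<forall>k<N. u k \<ge> 0) \<and>
     (\<forall>k<N. (\<Sum>j\<le>k. u j) \<ge> (\<Sum>j\<le>k. w j))"

end

theory Submission
  imports Defs
begin

declare ls_from.simps[simp del]

lemma jstar_props:
  assumes "k < N"
  shows "jstar v N k \<in> {1..N-k}"
    "\<And>jj. jj \<in> {1..N-k} \<Longrightarrow> blk_avg v k jj \<le> blk_avg v k (jstar v N k)"
proof -
  let ?A = "{1..N-k}"
  let ?S = "{j \<in> ?A. \<forall>j'\<in>?A. blk_avg v k j' \<le> blk_avg v k j}"
  have fin: "finite ?A" and ne: "?A \<noteq> {}" using assms by auto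
  have "Max (blk_avg v k ` ?A) \<in> blk_avg v k ` ?A" using fin ne by (intro Max_in) auto
  then obtain j where j: "j \<in> ?A" "blk_avg v k j = Max (blk_avg v k ` ?A)" by auto
  have "j \<in> ?S" using j fin by auto
  hence "?S \<noteq> {}" by auto
  moreover have "finite ?S" using fin by auto
  ultimately have "Max ?S \<in> ?S" by (intro Max_in)
  hence "jstar v N k \<in> ?S" unfolding jstar_def .
  thus "jstar v N k \<in> ?A" "\<And>jj. jj \<in> ?A \<Longrightarrow> blk_avg v k jj \<le> blk_avg v k (jstar v N k)" by auto
qed

lemma ls_in: fixes v N k i shows "k < N \<Longrightarrow> i < k + jstar v N k \<Longrightarrow> ls_from v N k i = blk_avg v k (jstar v N k)"
  by (subst ls_from.simps) auto

lemma ls_out: fixes v N k i shows "k < N \<Longrightarrow> k + jstar v N k \<le> i \<Longrightarrow> ls_from v N k i = ls_from v N (k + jstar v N k) i"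
  by (subst ls_from.simps) auto

lemma blk_sum: "j \<ge> 1 \<Longrightarrow> real j * blk_avg v k j = (\<Sum>i=k..<k+j. v i)"
  by (simp add: blk_avg_def)

lemma const_sum: "(\<Sum>i=k..<k+j. (c::real)) = real j * c"
  by simp

lemma ls_pos:
  assumes w: "\<forall>i<N. w i > 0"
  shows "k \<le> i \<Longrightarrow> i < N \<Longrightarrow> ls_from w N k i > 0"
proof (induction "N - k" arbitrary: k rule: less_induct)
  case less
  define j where "j = jstar w N k"
  have kN: "k < N" using less by auto
  have j: "1 \<le> j" "j \<le> N - k" using jstar_props(1)[OF kN] j_def by auto
  show ?case
  proof (cases "i < k + j")
    case True
    have "(\<Sum>i=k..<k+j. w i) > 0" using j w by (intro sum_pos) auto
    then show ?thesis using ls_in[OF kN] True j unfolding j_def blk_avg_def by simp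
  next
    case False
    then show ?thesis using less.hyps[of "k+j"] less.prems ls_out[where v=w and i=i, OF kN] j unfolding j_def by auto
  qed
qed

lemma ls_feas:
  shows "k < m \<Longrightarrow> m \<le> N \<Longrightarrow> (\<Sum>i=k..<m. w i) \<le> (\<Sum>i=k..<m. ls_from w N k i)"
proof (induction "N - k" arbitrary: k rule: less_induct)
  case less
  define j where "j = jstar w N k"
  define a where "a = blk_avg w k j"
  have kN: "k < N" using less by auto
  have j: "1 \<le> j" "j \<le> N - k" using jstar_props(1)[OF kN] j_def by auto
  have bs: "(\<Sum>i=k..<k+j. ls_from w N k i) = (\<Sum>i=k..<k+j. w i)"
  proof -
    have "(\<Sum>i=k..<k+j. ls_from w N k i) = (\<Sum>i=k..<k+j. a)"
      using ls_in[OF kN] unfolding j_def a_def by (intro sum.cong) auto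
    also have "\<dots> = (\<Sum>i=k..<k+j. w i)" using blk_sum[OF j(1)] unfolding a_def by simp
    finally show ?thesis .
  qed
  show ?case
  proof (cases "m \<le> k + j")
    case True
    define p where "p = m - k"
    have p: "1 \<le> p" "p \<le> N - k" "m = k + p" using less True j unfolding p_def by auto
    have "(\<Sum>i=k..<m. ls_from w N k i) = (\<Sum>i=k..<k+p. a)"
      using ls_in[OF kN] True p unfolding j_def a_def by (intro sum.cong) auto
    also have "\<dots> = real p * a" by simp
    also have "\<dots> \<ge> real p * blk_avg w k p"
      using jstar_props(2)[where v=w and jj=p, OF kN] p unfolding a_def j_def by (intro mult_left_mono) auto
    finally show ?thesis using blk_sum[OF p(1), of w k] p by simp
  next
    case False
    have ih: "(\<Sum>i=k+j..<m. w i) \<le> (\<Sum>i=k+j..<m. ls_from w N (k+j) i)"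
      using less.hyps[of "k+j"] less.prems False j by auto
    have "(\<Sum>i=k+j..<m. ls_from w N (k+j) i) = (\<Sum>i=k+j..<m. ls_from w N k i)"
      using ls_out[OF kN] unfolding j_def by (intro sum.cong) auto
    with ih bs False show ?thesis
      using sum.atLeastLessThan_concat[of k "k+j" m w] sum.atLeastLessThan_concat[of k "k+j" m "ls_from w N k"] by simp
  qed
qed

lemma ls_next_le:
  assumes kN: "k < N" and k'N: "k + jstar w N k < N"
  shows "ls_from w N (k + jstar w N k) (k + jstar w N k) \<le> blk_avg w k (jstar w N k)"
proof -
  define j where "j = jstar w N k"
  define a where "a = blk_avg w k j"
  define k' where "k' = k + j"
  define j' where "j' = jstar w N k'"
  define a' where "a' = blk_avg w k' j'"
  have j: "1 \<le> j" "j \<le> N - k" using jstar_props(1)[OF kN] j_def by auto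
  have k'N2: "k' < N" using k'N unfolding k'_def j_def .
  have j': "1 \<le> j'" "j' \<le> N - k'" using jstar_props(1)[OF k'N2] j'_def by auto
  have v: "ls_from w N k' k' = a'" using ls_in[where v=w and i=k', OF k'N2] j' unfolding a'_def j'_def by simp
  have "blk_avg w k (j + j') \<le> a"
    using jstar_props(2)[where v=w and jj="j+j'", OF kN] j j' unfolding a_def j_def k'_def by auto
  hence "real (j+j') * blk_avg w k (j + j') \<le> real (j+j') * a" by (intro mult_left_mono) auto
  moreover have "real (j+j') * blk_avg w k (j + j') = (\<Sum>i=k..<k+(j+j'). w i)" using j by (intro blk_sum) simp
  ultimately have "(\<Sum>i=k..<k+(j+j'). w i) \<le> real (j+j') * a" by linarith
  moreover have "(\<Sum>i=k..<k+(j+j'). w i) = (\<Sum>i=k..<k'. w i) + (\<Sum>i=k'..<k'+j'. w i)"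
    unfolding k'_def by (subst sum.atLeastLessThan_concat[symmetric]) (auto simp: add.assoc)
  moreover have "(\<Sum>i=k..<k'. w i) = real j * a" using blk_sum[OF j(1), of w k] unfolding a_def k'_def by simp
  moreover have "(\<Sum>i=k'..<k'+j'. w i) = real j' * a'" using blk_sum[OF j'(1), of w k'] unfolding a'_def by simp
  ultimately have "real j' * a' \<le> real j' * a" by (simp add: algebra_simps)
  hence "a' \<le> a" using j' by simp
  thus ?thesis using v unfolding a_def j_def k'_def by simp
qed

lemma ls_mono:
  shows "k \<le> i \<Longrightarrow> i + 1 < N \<Longrightarrow> ls_from w N k (i+1) \<le> ls_from w N k i"
proof (induction "N - k" arbitrary: k rule: less_induct)
  case less
  define j where "j = jstar w N k"
  have kN: "k < N" using less by auto
  have j: "1 \<le> j" "j \<le> N - k" using jstar_props(1)[OF kN] j_def by auto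
  consider "i + 1 < k + j" | "i + 1 = k + j" | "k + j \<le> i" by linarith
  then show ?case
  proof cases
    case 1
    then show ?thesis using ls_in[where v=w and i=i, OF kN] ls_in[where v=w and i="i+1", OF kN] unfolding j_def by simp
  next
    case 2
    have "ls_from w N k (i+1) = ls_from w N (k+j) (k+j)" using ls_out[where v=w and i="i+1", OF kN] 2 unfolding j_def by simp
    also have "\<dots> \<le> blk_avg w k j" using ls_next_le[OF kN] 2 less.prems unfolding j_def by simp
    also have "\<dots> = ls_from w N k i" using ls_in[where v=w and i=i, OF kN] 2 unfolding j_def by simp
    finally show ?thesis .
  next
    case 3
    then show ?thesis using less.hyps[of "k+j"] less.prems j ls_out[where v=w and i=i, OF kN] ls_out[where v=w and i="i+1", OF kN]
      unfolding j_def by auto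
  qed
qed

lemma ls_lin:
  assumes w: "\<forall>i<N. w i > 0"
    and hmono: "\<And>x y. 0 < x \<Longrightarrow> x \<le> y \<Longrightarrow> h x \<le> (h y::real)"
    and hpos: "\<And>x. 0 < x \<Longrightarrow> 0 \<le> h x"
  shows "k < N \<Longrightarrow> 0 \<le> d \<Longrightarrow> (\<forall>m. k < m \<and> m \<le> N \<longrightarrow> 0 \<le> d + (\<Sum>i=k..<m. u i - w i))
    \<Longrightarrow> - h (ls_from w N k k) * d \<le> (\<Sum>i=k..<N. h (ls_from w N k i) * (u i - ls_from w N k i))"
proof (induction "N - k" arbitrary: k d rule: less_induct)
  case less
  define j where "j = jstar w N k"
  define a where "a = blk_avg w k j"
  define k' where "k' = k + j"
  have kN: "k < N" using less by auto
  have j: "1 \<le> j" "j \<le> N - k" using jstar_props(1)[OF kN] j_def by auto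
  have ak: "ls_from w N k k = a" using ls_in[where v=w and i=k, OF kN] j unfolding a_def j_def by simp
  have apos: "a > 0" using ls_pos[OF w, of k k] kN ak by simp
  define D where "D = d + (\<Sum>i=k..<k'. u i - w i)"
  have D0: "0 \<le> D" using less.prems(3) j unfolding D_def k'_def by auto
  have first: "(\<Sum>i=k..<k'. h (ls_from w N k i) * (u i - ls_from w N k i)) = h a * (D - d)"
  proof -
    have "(\<Sum>i=k..<k'. h (ls_from w N k i) * (u i - ls_from w N k i)) = (\<Sum>i=k..<k'. h a * (u i - a))"
      using ls_in[where v=w, OF kN] unfolding j_def a_def k'_def by (intro sum.cong) auto
    also have "\<dots> = h a * ((\<Sum>i=k..<k'. u i) - real j * a)"
      by (simp add: sum_distrib_left[symmetric] sum_subtractf k'_def)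
    also have "real j * a = (\<Sum>i=k..<k'. w i)" using blk_sum[OF j(1), of w k] unfolding a_def k'_def .
    also have "(\<Sum>i=k..<k'. u i) - (\<Sum>i=k..<k'. w i) = D - d" unfolding D_def by (simp add: sum_subtractf)
    finally show ?thesis .
  qed
  show ?case
  proof (cases "k' = N")
    case True
    have "- h a * d \<le> h a * (D - d)" using hpos[OF apos] D0 by (simp add: algebra_simps)
    then show ?thesis using first True ak by simp
  next
    case False
    hence k'N: "k' < N" using j unfolding k'_def by auto
    define a' where "a' = ls_from w N k' k'"
    have a'pos: "a' > 0" using ls_pos[OF w, of k' k'] k'N unfolding a'_def by simp
    have a'a: "a' \<le> a" using ls_next_le[OF kN] k'N unfolding a'_def a_def k'_def j_def by simp
    have lt: "N - k' < N - k" using j k'N unfolding k'_def by auto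
    have ih: "- h a' * D \<le> (\<Sum>i=k'..<N. h (ls_from w N k' i) * (u i - ls_from w N k' i))"
      unfolding a'_def
    proof (rule less.hyps[OF lt])
      show "k' < N" by fact
      show "0 \<le> D" by fact
      show "\<forall>m. k' < m \<and> m \<le> N \<longrightarrow> 0 \<le> D + (\<Sum>i = k'..<m. u i - w i)"
      proof (intro allI impI)
        fix m assume m: "k' < m \<and> m \<le> N"
        have "D + (\<Sum>i = k'..<m. u i - w i) = d + (\<Sum>i = k..<m. u i - w i)"
          unfolding D_def using m sum.atLeastLessThan_concat[of k k' m "\<lambda>i. u i - w i"] unfolding k'_def by simp
        also have "\<dots> \<ge> 0" using less.prems(3) m j unfolding k'_def by auto
        finally show "0 \<le> D + (\<Sum>i = k'..<m. u i - w i)" .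
      qed
    qed
    have second: "(\<Sum>i=k'..<N. h (ls_from w N k' i) * (u i - ls_from w N k' i))
        = (\<Sum>i=k'..<N. h (ls_from w N k i) * (u i - ls_from w N k i))"
      using ls_out[where v=w, OF kN] unfolding j_def k'_def by (intro sum.cong) auto
    have split: "(\<Sum>i=k..<N. h (ls_from w N k i) * (u i - ls_from w N k i))
       = (\<Sum>i=k..<k'. h (ls_from w N k i) * (u i - ls_from w N k i)) + (\<Sum>i=k'..<N. h (ls_from w N k i) * (u i - ls_from w N k i))"
      by (rule sum.atLeastLessThan_concat[symmetric]) (use k'N in \<open>auto simp: k'_def\<close>)
    have "h a' * D \<le> h a * D" using hmono[OF a'pos a'a] D0 by (intro mult_right_mono) auto
    then show ?thesis using split first second ih ak by (simp add: algebra_simps)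
  qed
qed

definition sg :: "(real \<Rightarrow> real) \<Rightarrow> real \<Rightarrow> real" where
  "sg G a = Sup ((\<lambda>y. (G a - G y) / (a - y)) ` {0..<a})"

lemma three_slope:
  assumes sc: "strict_convex_on {0..} G" and yy: "0 \<le> y" "y < a" "a < x"
  shows "(G a - G y) / (a - y) \<le> (G x - G a) / (x - a)"
proof -
  define t where "t = (x - a) / (x - y)"
  have t01: "0 < t" "t < 1" using yy by (auto simp: t_def field_simps)
  have tt: "t * (x - y) = x - a" using yy by (simp add: t_def)
  hence aeq: "t * y + (1 - t) * x = a" by (simp add: algebra_simps)
  have "G (t * y + (1 - t) * x) < t * G y + (1 - t) * G x"
    using sc t01 yy unfolding strict_convex_on_def by auto
  hence "G a < t * G y + (1 - t) * G x" using aeq by simp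
  hence "(x - y) * G a \<le> (x - y) * (t * G y + (1 - t) * G x)" using yy by simp
  also have "(x - y) * (t * G y + (1 - t) * G x) = (t * (x - y)) * G y + ((x - y) - t * (x - y)) * G x"
    by (simp add: algebra_simps)
  also have "\<dots> = (x - a) * G y + (a - y) * G x" unfolding tt by (simp add: algebra_simps)
  finally have key: "(x - y) * G a \<le> (x - a) * G y + (a - y) * G x" .
  have "(G a - G y) * (x - a) \<le> (G x - G a) * (a - y)" using key by (simp add: algebra_simps)
  thus ?thesis using yy by (simp add: divide_simps)
qed

lemma sg_bdd:
  assumes sc: "strict_convex_on {0..} G" and "a > 0"
  shows "bdd_above ((\<lambda>y. (G a - G y) / (a - y)) ` {0..<a})"
  unfolding bdd_above_def
proof (intro exI ballI)
  fix z assume "z \<in> (\<lambda>y. (G a - G y) / (a - y)) ` {0..<a}"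
  then obtain y where y: "0 \<le> y" "y < a" "z = (G a - G y) / (a - y)" by auto
  show "z \<le> (G (a+1) - G a) / ((a+1) - a)" using three_slope[OF sc y(1,2), of "a+1"] y by simp
qed

lemma sg_upper:
  assumes sc: "strict_convex_on {0..} G" and "0 \<le> y" "y < a"
  shows "(G a - G y) / (a - y) \<le> sg G a"
  unfolding sg_def using assms by (intro cSup_upper sg_bdd) auto

lemma sg_least:
  assumes sc: "strict_convex_on {0..} G" and "0 < a" "a < x"
  shows "sg G a \<le> (G x - G a) / (x - a)"
  unfolding sg_def using assms by (intro cSup_least) (auto intro: three_slope)

lemma sg_sub:
  assumes sc: "strict_convex_on {0..} G" and a: "0 < a" and x: "0 \<le> x"
  shows "G a + sg G a * (x - a) \<le> G x"
proof (cases x a rule: linorder_cases)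
  case less
  have "(G a - G x) / (a - x) \<le> sg G a" using sg_upper[OF sc x less] .
  hence "G a - G x \<le> sg G a * (a - x)" using less by (simp add: divide_simps)
  then show ?thesis by (simp add: algebra_simps)
next
  case equal then show ?thesis by simp
next
  case greater
  have "sg G a \<le> (G x - G a) / (x - a)" using sg_least[OF sc a greater] .
  hence "sg G a * (x - a) \<le> G x - G a" using greater by (simp add: divide_simps)
  then show ?thesis by (simp add: algebra_simps)
qed

lemma sg_mono:
  assumes sc: "strict_convex_on {0..} G" and "0 < a" "a \<le> b"
  shows "sg G a \<le> sg G b"
proof (cases "a = b")
  case False
  hence ab: "a < b" using assms by simp
  have "sg G a \<le> (G b - G a) / (b - a)" using sg_least[OF sc assms(2) ab] .
  also have "\<dots> \<le> sg G b" using sg_upper[OF sc _ ab] assms by simp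
  finally show ?thesis .
qed simp

lemma sg_nonneg:
  assumes sc: "strict_convex_on {0..} G" and m: "mono_on {0..} G" and a: "0 < a"
  shows "0 \<le> sg G a"
proof -
  have "G 0 \<le> G a" using m a by (auto intro: mono_onD)
  hence "0 \<le> (G a - G 0) / (a - 0)" using a by simp
  also have "\<dots> \<le> sg G a" using sg_upper[OF sc _ a] by simp
  finally show ?thesis .
qed

theorem theorem1:
  fixes N :: nat and G :: "real \<Rightarrow> real" and w :: "nat \<Rightarrow> real"
  assumes "N \<ge> 1"
    and "strict_convex_on {0..} G"
    and "mono_on {0..} G"
    and "\<forall>x\<ge>0. G x \<ge> 0"
    and "G 0 = 0"
    and "\<forall>k<N. w k > 0"
  shows "feasible w N (LS w N)
    \<and> (\<forall>u. feasible w N u \<longrightarrow> (\<Sum>k<N. G (LS w N k)) \<le> (\<Sum>k<N. G (u k)))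
    \<and> (\<forall>u. feasible w N u \<longrightarrow> (\<Sum>k<N. G (u k)) = (\<Sum>k<N. G (LS w N k))
           \<longrightarrow> (\<forall>k<N. u k = LS w N k))
    \<and> (\<forall>k. k + 1 < N \<longrightarrow> LS w N (k + 1) \<le> LS w N k)"
proof -
  have w: "\<forall>i<N. w i > 0" using assms(6) .
  have sc: "strict_convex_on {0..} G" by fact
  let ?L = "LS w N"
  have L_eq: "?L = ls_from w N 0" unfolding LS_def ..
  have Lpos: "\<And>i. i < N \<Longrightarrow> ?L i > 0" unfolding L_eq using ls_pos[OF w] by simp
  have feasL: "feasible w N ?L"
    unfolding feasible_def
  proof (intro conjI allI impI)
    fix k assume k: "k < N"
    show "0 \<le> ?L k" using Lpos[OF k] by simp
    have "(\<Sum>i=0..<Suc k. w i) \<le> (\<Sum>i=0..<Suc k. ls_from w N 0 i)" using ls_feas[of 0 "Suc k" N w] k by simp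
    thus "(\<Sum>j\<le>k. w j) \<le> (\<Sum>j\<le>k. ?L j)" unfolding L_eq by (simp add: atLeast0LessThan lessThan_Suc_atMost)
  qed
  have opt: "(\<Sum>k<N. G (?L k)) \<le> (\<Sum>k<N. G (u k))" if fu: "feasible w N u" for u
  proof -
    have u0: "\<And>k. k<N \<Longrightarrow> 0 \<le> u k" using fu unfolding feasible_def by auto
    have hyp: "\<forall>m. 0 < m \<and> m \<le> N \<longrightarrow> 0 \<le> 0 + (\<Sum>i=0..<m. u i - w i)"
    proof (intro allI impI)
      fix m assume m: "0 < m \<and> m \<le> N"
      then obtain m' where m': "m = Suc m'" by (cases m) auto
      have "(\<Sum>j\<le>m'. w j) \<le> (\<Sum>j\<le>m'. u j)" using fu m m' unfolding feasible_def by auto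
      thus "0 \<le> 0 + (\<Sum>i=0..<m. u i - w i)" unfolding m'
        by (simp add: atLeast0LessThan lessThan_Suc_atMost sum_subtractf)
    qed
    have lin: "- sg G (ls_from w N 0 0) * 0 \<le> (\<Sum>i=0..<N. sg G (ls_from w N 0 i) * (u i - ls_from w N 0 i))"
    proof (rule ls_lin[where h="sg G" and k=0 and d=0 and u=u and w=w and N=N])
      show "\<forall>i<N. 0 < w i" by (rule w)
      show "\<And>x y. 0 < x \<Longrightarrow> x \<le> y \<Longrightarrow> sg G x \<le> sg G y" by (rule sg_mono[OF sc])
      show "\<And>x. 0 < x \<Longrightarrow> 0 \<le> sg G x" by (rule sg_nonneg[OF sc assms(3)])
      show "0 < N" using assms(1) by simp
      show "(0::real) \<le> 0" by simp
      show "\<forall>m. 0 < m \<and> m \<le> N \<longrightarrow> 0 \<le> 0 + (\<Sum>i = 0..<m. u i - w i)" by (rule hyp)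
    qed
    have "(\<Sum>k<N. G (?L k)) + (\<Sum>k<N. sg G (?L k) * (u k - ?L k)) \<le> (\<Sum>k<N. G (u k))"
      unfolding sum.distrib[symmetric] by (intro sum_mono sg_sub[OF sc]) (auto simp: Lpos u0)
    moreover have "0 \<le> (\<Sum>k<N. sg G (?L k) * (u k - ?L k))" using lin unfolding L_eq by (simp add: atLeast0LessThan)
    ultimately show ?thesis by linarith
  qed
  have convh: "G ((x+y)/2) < (G x + G y)/2" if "0 \<le> x" "0 \<le> y" "x \<noteq> y" for x y
  proof -
    have "\<forall>x\<in>{0..}. \<forall>y\<in>{0..}. \<forall>t. x \<noteq> y \<longrightarrow> 0 < t \<longrightarrow> t < 1 \<longrightarrow>
       G (t * x + (1 - t) * y) < t * G x + (1 - t) * G y" using sc unfolding strict_convex_on_def by blast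
    hence "x \<in> {0..} \<Longrightarrow> y \<in> {0..} \<Longrightarrow> x \<noteq> y \<Longrightarrow> (0::real) < 1/2 \<Longrightarrow> (1/2::real) < 1 \<Longrightarrow>
       G ((1/2) * x + (1 - 1/2) * y) < (1/2) * G x + (1 - 1/2) * G y" by blast
    hence "G ((1/2) * x + (1 - 1/2) * y) < (1/2) * G x + (1 - 1/2) * G y"
      using that by simp
    thus ?thesis by (simp add: field_simps)
  qed
  have convh2: "G ((x+y)/2) \<le> (G x + G y)/2" if "0 \<le> x" "0 \<le> y" for x y
    using convh[OF that] by (cases "x = y") auto
  have uniq: "\<forall>k<N. u k = ?L k" if fu: "feasible w N u" and eq: "(\<Sum>k<N. G (u k)) = (\<Sum>k<N. G (?L k))" for u
  proof (rule ccontr)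
    assume "\<not> (\<forall>k<N. u k = ?L k)"
    then obtain k0 where k0: "k0 < N" "u k0 \<noteq> ?L k0" by auto
    have u0: "\<And>k. k<N \<Longrightarrow> 0 \<le> u k" using fu unfolding feasible_def by auto
    have L0: "\<And>k. k<N \<Longrightarrow> 0 \<le> ?L k" using Lpos by (simp add: less_imp_le)
    define v where "v = (\<lambda>i. (u i + ?L i)/2)"
    have fv: "feasible w N v"
      unfolding feasible_def
    proof (intro conjI allI impI)
      fix k assume k: "k < N"
      show "0 \<le> v k" using u0[OF k] L0[OF k] unfolding v_def by simp
      have a: "(\<Sum>j\<le>k. w j) \<le> (\<Sum>j\<le>k. u j)" using fu k unfolding feasible_def by auto
      have b: "(\<Sum>j\<le>k. w j) \<le> (\<Sum>j\<le>k. ?L j)" using feasL k unfolding feasible_def by auto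
      have "(\<Sum>j\<le>k. v j) = ((\<Sum>j\<le>k. u j) + (\<Sum>j\<le>k. ?L j)) / 2"
        unfolding v_def by (simp add: sum_divide_distrib[symmetric] sum.distrib)
      thus "(\<Sum>j\<le>k. w j) \<le> (\<Sum>j\<le>k. v j)" using a b by (simp add: field_simps)
    qed
    have "(\<Sum>k<N. G (v k)) < (\<Sum>k<N. (G (u k) + G (?L k))/2)"
    proof (rule sum_strict_mono_ex1)
      show "finite {..<N}" by simp
      show "\<forall>x\<in>{..<N}. G (v x) \<le> (G (u x) + G (?L x)) / 2"
        unfolding v_def using u0 L0 convh2 by auto
      show "\<exists>a\<in>{..<N}. G (v a) < (G (u a) + G (?L a)) / 2"
        unfolding v_def using u0[OF k0(1)] L0[OF k0(1)] convh[of "u k0" "?L k0"] k0 by (intro bexI[of _ k0]) auto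
    qed
    also have "\<dots> = ((\<Sum>k<N. G (u k)) + (\<Sum>k<N. G (?L k))) / 2"
      by (simp add: sum_divide_distrib[symmetric] sum.distrib)
    also have "\<dots> = (\<Sum>k<N. G (?L k))" using eq by simp
    finally show False using opt[OF fv] by linarith
  qed
  have mono: "?L (k+1) \<le> ?L k" if "k + 1 < N" for k
    unfolding L_eq using ls_mono[of 0 k N w] that by simp
  show ?thesis using feasL opt uniq mono by blast
qed

end
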